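(* Let $U_1,\dots,U_d$ be finite sets of points in $\mathbb{R}^d$, each of odd cardinality, whose union is in general position (no $d+1$ of the points lie on a common affine hyperplane). Then there exist points $p_1\in U_1,\dots,p_d\in U_d$ such that the hyperplane $h$ spanned by $p_1,\dots,p_d$ halves each $U_i$, i.e. each of the two open halfspaces determined by $h$ contains exactly $(|U_i|-1)/2$ points of $U_i$, for every $i=1,\dots,d$. *)

theory Defs
  imports "HOL-Analysis.Analysis"
begin

text \<open>A finite point set in R^d (d = CARD('n)) is in general position if
  no d+1 of its points lie on a common affine hyperplane; as usual this is
  taken to mean that every subset of at most d+1 points is affinely independent.\<close>
definition general_position :: "(real ^ 'n) set \<Rightarrow> bool" where
  "general_position S \<longleftrightarrow>
     (\<forall>T. T \<subseteq> S \<and> card T \<le> CARD('n) + 1 \<longrightarrow> \<not> affine_dependent T)"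

end

theory Submission
  imports Defs "HOL-Analysis.Analysis" "HOL-Homology.Homology"
begin

locale onb =
  fixes b :: "nat \<Rightarrow> 'a::euclidean_space" and D :: nat
  assumes onb: "\<And>i j. i \<le> D \<Longrightarrow> j \<le> D \<Longrightarrow> b i \<bullet> b j = (if i = j then 1 else 0)"
begin

definition proj :: "nat \<Rightarrow> 'a \<Rightarrow> 'a" where
  "proj k x = (\<Sum>i\<le>k. (x \<bullet> b i) *\<^sub>R b i)"

definition V :: "nat \<Rightarrow> 'a set" where
  "V k = span (b ` {..k})"

definition S :: "nat \<Rightarrow> 'a set" where
  "S k = sphere 0 1 \<inter> V k"

definition iota :: "'a \<Rightarrow> nat \<Rightarrow> real" where
  "iota x = (\<lambda>i. if i \<le> D then x \<bullet> b i else 0)"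

definition rho :: "(nat \<Rightarrow> real) \<Rightarrow> 'a" where
  "rho z = (\<Sum>i\<le>D. z i *\<^sub>R b i)"

definition T :: "('a \<Rightarrow> 'a) \<Rightarrow> (nat \<Rightarrow> real) \<Rightarrow> nat \<Rightarrow> real" where
  "T g = iota \<circ> g \<circ> rho"

lemma proj_inner:
  assumes "j \<le> D" "k \<le> D"
  shows "proj k x \<bullet> b j = (if j \<le> k then x \<bullet> b j else 0)"
proof -
  have "proj k x \<bullet> b j = (\<Sum>i\<le>k. (x \<bullet> b i) * (b i \<bullet> b j))"
    by (simp add: proj_def inner_sum_left)
  also have "\<dots> = (\<Sum>i\<le>k. if i = j then x \<bullet> b j else 0)"
    by (rule sum.cong) (use assms in \<open>auto simp: onb\<close>)
  also have "\<dots> = (if j \<le> k then x \<bullet> b j else 0)"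
    by (simp add: sum.delta)
  finally show ?thesis .
qed

lemma linear_proj: "linear (proj k)"
  by (rule linearI) (simp_all add: proj_def inner_add_left scaleR_add_left sum.distrib scaleR_sum_right)

lemma proj_in_V: "proj k x \<in> V k"
  unfolding proj_def V_def by (intro span_sum span_mul span_base) auto

lemma subspace_V: "subspace (V k)"
  by (simp add: V_def)

lemma proj_b: "j \<le> k \<Longrightarrow> k \<le> D \<Longrightarrow> proj k (b j) = b j"
proof -
  assume a: "j \<le> k" "k \<le> D"
  have "proj k (b j) = (\<Sum>i\<le>k. (if i = j then b j else 0))"
    unfolding proj_def by (rule sum.cong) (use a in \<open>auto simp: onb\<close>)
  also have "\<dots> = b j" using a by (simp add: sum.delta)
  finally show ?thesis .
qed

lemma proj_V: assumes "k \<le> D" "x \<in> V k" shows "proj k x = x"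
proof -
  have "proj k x = id x"
    by (rule linear_eq_on_span[where f="proj k" and g=id and B="b ` {..k}"]) (use assms proj_b linear_proj linear_id in \<open>auto simp: V_def\<close>)
  then show ?thesis by simp
qed

lemma V_iff: "k \<le> D \<Longrightarrow> x \<in> V k \<longleftrightarrow> proj k x = x"
  using proj_V proj_in_V by metis

lemma V_mono: "j \<le> k \<Longrightarrow> V j \<subseteq> V k"
  unfolding V_def by (rule span_mono) auto

lemma V_inner_zero: assumes "k \<le> D" "x \<in> V k" "k < j" "j \<le> D" shows "x \<bullet> b j = 0"
  using proj_inner[of j k x] assms proj_V by auto

lemma inner_proj: "k \<le> D \<Longrightarrow> proj k x \<bullet> y = (\<Sum>i\<le>k. (x \<bullet> b i) * (y \<bullet> b i))"
  unfolding proj_def inner_sum_left by (rule sum.cong) (simp_all add: inner_commute)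

lemma norm_V: assumes "k \<le> D" "x \<in> V k" shows "(norm x)^2 = (\<Sum>i\<le>k. (x \<bullet> b i)^2)"
proof -
  have "(norm x)^2 = proj k x \<bullet> x" using proj_V assms by (simp add: power2_norm_eq_inner)
  also have "\<dots> = (\<Sum>i\<le>k. (x \<bullet> b i)^2)" using assms by (simp add: inner_proj power2_eq_square)
  finally show ?thesis .
qed

lemma proj_proj: "j \<le> k \<Longrightarrow> k \<le> D \<Longrightarrow> proj j (proj k x) = proj j x"
  unfolding proj_def[of j] by (rule sum.cong) (auto simp: proj_inner)

lemma proj_orth: assumes "k \<le> D" "y \<in> V k" shows "(x - proj k x) \<bullet> y = 0"
proof -
  have "(x - proj k x) \<bullet> y = x \<bullet> proj k y - proj k x \<bullet> y"
    using proj_V assms by (simp add: inner_diff_left)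
  also have "\<dots> = 0" using assms by (simp add: inner_proj inner_commute[of x] mult.commute)
  finally show ?thesis .
qed

lemma norm_proj_le: assumes "k \<le> D" shows "norm (proj k x) \<le> norm x"
proof -
  have o: "proj k x \<bullet> (x - proj k x) = 0"
    using proj_orth[OF assms proj_in_V, of x x] by (simp add: inner_commute)
  have "(norm x)^2 = (norm (proj k x))^2 + (norm (x - proj k x))^2"
    using norm_add_Pythagorean[of "proj k x" "x - proj k x"] o by (simp add: orthogonal_def)
  then have "(norm (proj k x))^2 \<le> (norm x)^2" by simp
  then show ?thesis by (rule power2_le_imp_le) simp
qed

lemma b_norm: "i \<le> D \<Longrightarrow> norm (b i) = 1"
  using onb[of i i] by (simp add: norm_eq_sqrt_inner)

lemma b_in_V: "i \<le> k \<Longrightarrow> b i \<in> V k"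
  by (simp add: V_def span_base)

lemma V_step: assumes "Suc k \<le> D" "x \<in> V (Suc k)" "x \<bullet> b (Suc k) = 0" shows "x \<in> V k"
proof -
  have "proj k x = proj (Suc k) x - (x \<bullet> b (Suc k)) *\<^sub>R b (Suc k)"
    by (simp add: proj_def)
  then show ?thesis using assms proj_V[of "Suc k" x] proj_in_V[of k x] by simp
qed

end

context onb begin

lemma topspace_nsphere_eq: "topspace (nsphere k) = {x. (\<Sum>i\<le>k. x i ^ 2) = 1 \<and> (\<forall>i>k. x i = 0)}"
  by (simp add: nsphere)

lemma rho_inner: "j \<le> D \<Longrightarrow> rho z \<bullet> b j = z j"
proof -
  assume j: "j \<le> D"
  have "rho z \<bullet> b j = (\<Sum>i\<le>D. z i * (b i \<bullet> b j))" by (simp add: rho_def inner_sum_left)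
  also have "\<dots> = (\<Sum>i\<le>D. if i = j then z j else 0)" by (rule sum.cong) (use j in \<open>auto simp: onb\<close>)
  also have "\<dots> = z j" using j by (simp add: sum.delta)
  finally show ?thesis .
qed

lemma rho_in_V: assumes "k \<le> D" "\<And>i. i > k \<Longrightarrow> z i = 0" shows "rho z \<in> V k"
  unfolding rho_def
proof (rule subspace_sum[OF subspace_V])
  fix i assume "i \<in> {..D}"
  show "z i *\<^sub>R b i \<in> V k"
  proof (cases "i \<le> k")
    case True then show ?thesis by (simp add: V_def span_mul span_base)
  next
    case False then show ?thesis using assms by (simp add: subspace_0[OF subspace_V])
  qed
qed

lemma S_sym: "x \<in> S k \<Longrightarrow> -x \<in> S k"
  by (simp add: S_def subspace_neg[OF subspace_V])

lemma S_mono: "j \<le> k \<Longrightarrow> S j \<subseteq> S k"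
  using V_mono by (auto simp: S_def)

lemma rho_S: assumes "k \<le> D" "z \<in> topspace (nsphere k)" shows "rho z \<in> S k"
proof -
  have z: "(\<Sum>i\<le>k. z i ^ 2) = 1" "\<And>i. i > k \<Longrightarrow> z i = 0" using assms(2) by (auto simp: topspace_nsphere_eq)
  have V: "rho z \<in> V k" using rho_in_V assms z by auto
  have "(norm (rho z))^2 = (\<Sum>i\<le>k. (rho z \<bullet> b i)^2)" by (rule norm_V[OF assms(1) V])
  also have "\<dots> = (\<Sum>i\<le>k. z i ^ 2)" by (rule sum.cong) (use assms in \<open>auto simp: rho_inner\<close>)
  finally have "norm (rho z) = 1" using z norm_ge_zero[of "rho z"] by (auto simp: power2_eq_1_iff)
  then show ?thesis using V by (simp add: S_def)
qed

lemma iota_rho: assumes "k \<le> D" "z \<in> topspace (nsphere k)" shows "iota (rho z) = z"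
proof
  fix i
  have z: "\<And>i. i > k \<Longrightarrow> z i = 0" using assms(2) by (auto simp: topspace_nsphere_eq)
  show "iota (rho z) i = z i"
    using z[of i] assms(1) by (auto simp: iota_def rho_inner)
qed

lemma rho_iota: assumes "x \<in> V D" shows "rho (iota x) = x"
proof -
  have "rho (iota x) = proj D x"
    unfolding rho_def proj_def iota_def by (rule sum.cong) auto
  then show ?thesis using proj_V[OF order_refl assms] by simp
qed

lemma V_D: "k \<le> D \<Longrightarrow> V k \<subseteq> V D"
  by (rule V_mono)

lemma iota_S: assumes "k \<le> D" "x \<in> S k" shows "iota x \<in> topspace (nsphere k)"
proof -
  have x: "x \<in> V k" "norm x = 1" using assms by (auto simp: S_def)
  have "(\<Sum>i\<le>k. iota x i ^ 2) = (\<Sum>i\<le>k. (x \<bullet> b i)^2)"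
    by (rule sum.cong) (use assms in \<open>auto simp: iota_def\<close>)
  also have "\<dots> = 1" using norm_V[OF assms(1) x(1)] x(2) by simp
  finally have 1: "(\<Sum>i\<le>k. iota x i ^ 2) = 1" .
  have 2: "iota x i = 0" if "i > k" for i
    using V_inner_zero[OF assms(1) x(1) that] by (auto simp: iota_def)
  show ?thesis using 1 2 by (simp add: topspace_nsphere_eq)
qed

lemma cont_rho: assumes "k \<le> D" shows "continuous_map (nsphere k) (top_of_set (S k)) rho"
proof (rule continuous_map_into_subtopology)
  have "continuous_map euclidean (top_of_set (span (b ` {..D}))) rho"
    unfolding rho_def by (rule continuous_map_span_sum) auto
  then have "continuous_map (powertop_real UNIV) euclidean rho"
    by (simp add: euclidean_product_topology continuous_map_in_subtopology)
  then show "continuous_map (nsphere k) euclidean rho"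
    by (simp add: nsphere continuous_map_from_subtopology)
  show "rho \<in> topspace (nsphere k) \<rightarrow> S k" using rho_S assms by auto
qed

lemma cont_iota: assumes "k \<le> D" shows "continuous_map (top_of_set (S k)) (nsphere k) iota"
proof -
  have "continuous_map (top_of_set (S k)) (powertop_real UNIV) iota"
  proof (subst continuous_map_componentwise_UNIV, intro allI)
    fix i
    show "continuous_map (top_of_set (S k)) euclideanreal (\<lambda>x. iota x i)"
      by (cases "i \<le> D") (auto simp: iota_def continuous_map_iff_continuous intro!: continuous_intros)
  qed
  then show ?thesis
    using iota_S[OF assms] by (simp add: nsphere continuous_map_in_subtopology image_subset_iff)
qed

lemma cont_g: "continuous_on (S k) g \<Longrightarrow> g \<in> S k \<rightarrow> S k \<Longrightarrow> continuous_map (top_of_set (S k)) (top_of_set (S k)) g"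
  by (simp add: continuous_map_in_subtopology continuous_map_iff_continuous image_subset_iff_funcset)

lemma T_cont: assumes "k \<le> D" "continuous_on (S k) g" "g \<in> S k \<rightarrow> S k"
  shows "continuous_map (nsphere k) (nsphere k) (T g)"
proof -
  have "continuous_map (nsphere k) (top_of_set (S k)) (g \<circ> rho)"
    by (rule continuous_map_compose[OF cont_rho cont_g]) (use assms in auto)
  then have "continuous_map (nsphere k) (nsphere k) (iota \<circ> (g \<circ> rho))"
    by (rule continuous_map_compose[OF _ cont_iota]) (use assms in auto)
  then show ?thesis by (simp add: T_def o_assoc)
qed

lemma T_homotopic: assumes "k \<le> D" "homotopic_with_canon (\<lambda>_. True) (S k) (S k) g h"
  shows "Brouwer_degree2 k (T g) = Brouwer_degree2 k (T h)"
proof (rule Brouwer_degree2_homotopic)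
  have "homotopic_with (\<lambda>_. True) (nsphere k) (top_of_set (S k)) (g \<circ> rho) (h \<circ> rho)"
    by (rule homotopic_with_compose_continuous_map_right[OF assms(2) cont_rho[OF assms(1)]]) auto
  then have "homotopic_with (\<lambda>_. True) (nsphere k) (nsphere k) (iota \<circ> (g \<circ> rho)) (iota \<circ> (h \<circ> rho))"
    by (rule homotopic_with_compose_continuous_map_left[OF _ cont_iota[OF assms(1)]]) auto
  then show "homotopic_with (\<lambda>x. True) (nsphere k) (nsphere k) (T g) (T h)"
    by (simp add: T_def o_assoc)
qed

lemma T_compose: assumes "k \<le> D" "continuous_on (S k) g" "g \<in> S k \<rightarrow> S k" "continuous_on (S k) h" "h \<in> S k \<rightarrow> S k"
  shows "Brouwer_degree2 k (T (g \<circ> h)) = Brouwer_degree2 k (T g) * Brouwer_degree2 k (T h)"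
proof -
  have "Brouwer_degree2 k (T (g \<circ> h)) = Brouwer_degree2 k (T g \<circ> T h)"
  proof (rule Brouwer_degree2_eq)
    fix z assume z: "z \<in> topspace (nsphere k)"
    have "h (rho z) \<in> S k" using assms rho_S[OF assms(1) z] by auto
    then have "rho (iota (h (rho z))) = h (rho z)" using V_D[OF assms(1)] rho_iota by (auto simp: S_def)
    then show "T (g \<circ> h) z = (T g \<circ> T h) z" by (simp add: T_def)
  qed
  also have "\<dots> = Brouwer_degree2 k (T g) * Brouwer_degree2 k (T h)"
    by (rule Brouwer_degree2_compose) (use T_cont assms in auto)
  finally show ?thesis .
qed

lemma T_id: assumes "k \<le> D" "\<And>x. x \<in> S k \<Longrightarrow> g x = x"
  shows "Brouwer_degree2 k (T g) = 1"
proof -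
  have "Brouwer_degree2 k (T g) = Brouwer_degree2 k id"
  proof (rule Brouwer_degree2_eq)
    fix z assume z: "z \<in> topspace (nsphere k)"
    show "T g z = id z" using assms rho_S[OF assms(1) z] iota_rho[OF assms(1) z] by (simp add: T_def)
  qed
  then show ?thesis by simp
qed

lemma T_involution: assumes "k \<le> D" "continuous_on (S k) g" "g \<in> S k \<rightarrow> S k" "\<And>x. x \<in> S k \<Longrightarrow> g (g x) = x"
  shows "odd (Brouwer_degree2 k (T g))"
proof -
  have "Brouwer_degree2 k (T (g \<circ> g)) = 1" using assms by (intro T_id) auto
  then have "Brouwer_degree2 k (T g) * Brouwer_degree2 k (T g) = 1"
    using T_compose[OF assms(1-3) assms(2-3)] by simp
  then show ?thesis by (metis dvd_mult_cancel_left even_mult_iff odd_one)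
qed

lemma rho_neg: "rho (\<lambda>i. - z i) = - rho z"
  by (simp add: rho_def sum_negf)

lemma T_odd: assumes "k \<le> D" "\<And>x. x \<in> S k \<Longrightarrow> g (- x) = - g x" "u \<in> topspace (nsphere k)"
  shows "(T g \<circ> (\<lambda>x i. - x i)) u = ((\<lambda>x i. - x i) \<circ> T g) u"
  using assms rho_S[OF assms(1,3)] by (auto simp: T_def rho_neg iota_def)

end

lemma segment_nonzero:
  fixes a c :: "'a::real_normed_vector"
  assumes "norm a = 1" "norm c = 1" "a + c \<noteq> 0"
  shows "0 \<notin> closed_segment a c"
proof
  assume "0 \<in> closed_segment a c"
  then obtain u where u: "0 \<le> u" "u \<le> 1" "0 = (1 - u) *\<^sub>R a + u *\<^sub>R c"
    by (auto simp: in_segment)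
  then have e: "(1 - u) *\<^sub>R a = - (u *\<^sub>R c)" by (simp add: eq_neg_iff_add_eq_0)
  then have "norm ((1 - u) *\<^sub>R a) = norm (u *\<^sub>R c)" by simp
  then have "1 - u = u" using u assms by simp
  then have "u = 1/2" by simp
  have "(1/2::real) *\<^sub>R a = (1/2::real) *\<^sub>R (-c)" using e unfolding \<open>u = 1/2\<close> by simp
  then have "a = - c" by (subst (asm) scaleR_cancel_left) simp
  then have "a + c = 0" by simp
  then show False using assms by simp
qed

lemma nonantipodal_homotopic:
  fixes f g :: "'b::topological_space \<Rightarrow> 'a::real_normed_vector"
  assumes W: "subspace W" and fc: "continuous_on X f" and gc: "continuous_on X g"
    and fim: "f \<in> X \<rightarrow> sphere 0 1 \<inter> W" and gim: "g \<in> X \<rightarrow> sphere 0 1 \<inter> W"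
    and na: "\<And>x. x \<in> X \<Longrightarrow> f x + g x \<noteq> 0"
  shows "homotopic_with_canon (\<lambda>_. True) X (sphere 0 1 \<inter> W) f g"
proof -
  have "homotopic_with_canon (\<lambda>_. True) X (W - {0}) f g"
  proof (rule homotopic_with_linear[OF fc gc])
    fix x assume x: "x \<in> X"
    have "f x \<in> W" "g x \<in> W" using fim gim x by auto
    then have "closed_segment (f x) (g x) \<subseteq> W"
      using subspace_imp_convex[OF W] by (rule closed_segment_subset)
    moreover have "0 \<notin> closed_segment (f x) (g x)"
      using fim gim x na by (intro segment_nonzero) auto
    ultimately show "closed_segment (f x) (g x) \<subseteq> W - {0}" by auto
  qed
  then have "homotopic_with_canon (\<lambda>_. True) X (sphere 0 1 \<inter> W) ((\<lambda>y. inverse (norm y) *\<^sub>R y) \<circ> f) ((\<lambda>y. inverse (norm y) *\<^sub>R y) \<circ> g)"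
    by (rule homotopic_with_compose_continuous_left)
       (auto intro!: continuous_intros simp: subspace_scale[OF W])
  then show ?thesis
    by (rule homotopic_with_eq) (use fim gim in \<open>force simp: Pi_iff\<close>)+
qed

context onb begin

lemma compact_S: "compact (S k)"
  unfolding S_def V_def by (rule compact_Int_closed[OF compact_sphere closed_span])

lemma b_ne0: "i \<le> D \<Longrightarrow> b i \<noteq> 0"
  using b_norm by force

lemma approx:
  assumes k: "Suc k \<le> D" and gc: "continuous_on (S (Suc k)) g" and gS: "g \<in> S (Suc k) \<rightarrow> S (Suc k)"
    and godd: "\<And>x. x \<in> S (Suc k) \<Longrightarrow> g (- x) = - g x"
  obtains h v where "continuous_on (S (Suc k)) h" "h \<in> S (Suc k) \<rightarrow> S (Suc k)"
    "\<And>x. x \<in> S (Suc k) \<Longrightarrow> h (- x) = - h x"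
    "\<And>x. x \<in> S (Suc k) \<Longrightarrow> norm (h x - g x) < 1"
    "v \<in> S (Suc k)" "v \<notin> h ` S k"
proof -
  let ?n = "Suc k"
  have gV: "g ` S ?n \<subseteq> V ?n" using gS by (auto simp: S_def)
  obtain p where p: "polynomial_function p" "p ` S ?n \<subseteq> V ?n" "\<And>x. x \<in> S ?n \<Longrightarrow> norm (g x - p x) < 1/3"
    by (rule Stone_Weierstrass_polynomial_function_subspace[OF compact_S gc _ subspace_V gV, where e="1/3"]) auto
  define q where "q x = inverse 2 *\<^sub>R (p x - p (- x))" for x
  have qpoly: "polynomial_function q"
    unfolding q_def
    by (intro polynomial_function_cmul polynomial_function_diff p(1)
        polynomial_function_compose[OF polynomial_function_minus[OF polynomial_function_id] p(1), unfolded o_def])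
  have qodd: "q (- x) = - q x" for x by (simp add: q_def algebra_simps)
  have qV: "q x \<in> V ?n" if "x \<in> S ?n" for x
    using p(2) that S_sym[OF that] unfolding q_def
    by (intro subspace_scale[OF subspace_V] subspace_diff[OF subspace_V]) auto
  have qclose: "norm (q x - g x) < 1/3" if x: "x \<in> S ?n" for x
  proof -
    have "q x - g x = inverse 2 *\<^sub>R ((p x - g x) - (p (-x) - g (-x)))"
    proof -
      have "(1/2) *\<^sub>R g x + (1/2) *\<^sub>R g x = g x" by (simp flip: scaleR_add_left)
      then show ?thesis using godd[OF x] by (simp add: q_def algebra_simps)
    qed
    also have "norm \<dots> \<le> inverse 2 * (norm (p x - g x) + norm (p (-x) - g (-x)))"
      by (simp add: norm_triangle_ineq4)
    also have "\<dots> < inverse 2 * (1/3 + 1/3)"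
      using p(3)[OF x] p(3)[OF S_sym[OF x]] by (simp add: norm_minus_commute)
    finally show ?thesis by simp
  qed
  have gnorm: "norm (g x) = 1" if "x \<in> S ?n" for x using gS that by (auto simp: S_def)
  have qnorm: "norm (q x) > 2/3" if x: "x \<in> S ?n" for x
    using qclose[OF x] gnorm[OF x] norm_triangle_ineq2[of "g x" "q x"] by (simp add: norm_minus_commute)
  define h where "h x = inverse (norm (q x)) *\<^sub>R q x" for x
  have hS: "h \<in> S ?n \<rightarrow> S ?n"
  proof
    fix x assume x: "x \<in> S ?n"
    have "norm (q x) \<noteq> 0" using qnorm[OF x] by linarith
    then have "norm (h x) = 1" by (simp add: h_def)
    moreover have "h x \<in> V ?n" using qV[OF x] by (simp add: h_def subspace_scale[OF subspace_V])
    ultimately show "h x \<in> S ?n" by (simp add: S_def)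
  qed
  have hc: "continuous_on (S ?n) h"
    unfolding h_def
    by (intro continuous_on_scaleR continuous_on_inverse continuous_on_norm continuous_on_polymonial_function[OF qpoly])
       (use qnorm in force)
  have hodd: "h (- x) = - h x" for x by (simp add: h_def qodd)
  have hclose: "norm (h x - g x) < 1" if x: "x \<in> S ?n" for x
  proof -
    have "h x - q x = (inverse (norm (q x)) - 1) *\<^sub>R q x" by (simp add: h_def algebra_simps)
    have nq: "norm (q x) \<noteq> 0" using qnorm[OF x] by linarith
    have "(inverse (norm (q x)) - 1) * norm (q x) = 1 - norm (q x)" using nq by (simp add: algebra_simps)
    then have "norm (h x - q x) = \<bar>1 - norm (q x)\<bar>"
      using \<open>h x - q x = _\<close> by (metis norm_scaleR abs_mult abs_norm_cancel)
    also have "\<dots> = \<bar>norm (g x) - norm (q x)\<bar>" using gnorm[OF x] by simp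
    also have "\<dots> \<le> norm (g x - q x)" by (rule norm_triangle_ineq3)
    also have "\<dots> < 1/3" using qclose[OF x] by (simp add: norm_minus_commute)
    finally have "norm (h x - q x) < 1/3" .
    moreover have "norm (h x - g x) \<le> norm (h x - q x) + norm (q x - g x)"
      using norm_triangle_ineq[of "h x - q x" "q x - g x"] by simp
    ultimately show ?thesis using qclose[OF x] by linarith
  qed
  define K where "K e = norm e *\<^sub>R q (inverse (norm e) *\<^sub>R e)" for e
  have "\<exists>v\<in>V ?n. v \<noteq> 0 \<and> v \<notin> K ` (V k - {0})"
  proof (rule ccontr)
    assume "\<not> ?thesis"
    then have cov: "\<And>v. v \<in> V ?n \<Longrightarrow> v \<noteq> 0 \<Longrightarrow> v \<in> K ` (V k - {0})" by blast
    define Phi where "Phi y = K (proj k y) + (y - proj ?n y)" for y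
    define Dm where "Dm = {y. proj k y \<noteq> 0 \<and> b ?n \<bullet> y = 0}"
    have negH: "negligible {y. b ?n \<bullet> y = 0}"
    proof (rule negligible_hyperplane)
      show "b ?n \<noteq> 0 \<or> (0::real) \<noteq> 0" using b_ne0[OF k] by (rule disjI1)
    qed
    have "Dm \<subseteq> {y. b ?n \<bullet> y = 0}" unfolding Dm_def by blast
    then have negD: "negligible Dm" using negligible_subset[OF negH] by blast
    have diff: "Phi differentiable_on Dm"
    proof (rule differentiable_at_imp_differentiable_on)
      fix y assume "y \<in> Dm"
      then have e0: "proj k y \<noteq> 0" by (simp add: Dm_def)
      have pd: "proj j differentiable (at y)" for j by (rule linear_imp_differentiable[OF linear_proj])
      have nd: "(\<lambda>y. norm (proj k y)) differentiable (at y)"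
        by (rule differentiable_compose[of norm, OF differentiable_norm_at[OF e0] pd])
      have id: "(\<lambda>y. inverse (norm (proj k y))) differentiable (at y)"
        by (rule differentiable_inverse[OF nd]) (use e0 in simp)
      have sd: "(\<lambda>y. inverse (norm (proj k y)) *\<^sub>R proj k y) differentiable (at y)"
        by (rule differentiable_scaleR[OF id pd])
      have qd: "(\<lambda>y. q (inverse (norm (proj k y)) *\<^sub>R proj k y)) differentiable (at y)"
        by (rule differentiable_compose[of q, OF differentiable_at_polynomial_function[OF qpoly] sd])
      show "Phi differentiable (at y)"
        unfolding Phi_def K_def
        by (intro differentiable_add differentiable_diff differentiable_scaleR nd qd pd differentiable_ident)
    qed
    have negI: "negligible (Phi ` Dm)"
      by (rule negligible_differentiable_image_negligible[OF order_refl negD diff])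
    define Om where "Om = {z. proj ?n z \<noteq> 0}"
    have openO: "open Om" unfolding Om_def
      using linear_proj[of ?n] unfolding linear_conv_bounded_linear
      by (intro open_Collect_neq linear_continuous_on continuous_on_const)
    have "b 0 \<in> Om" using proj_b[of 0 ?n] k b_ne0[of 0] by (simp add: Om_def)
    then have "\<not> negligible Om" using open_not_negligible[OF openO] by auto
    moreover have OmP: "Om \<subseteq> Phi ` Dm"
    proof
      fix z assume z: "z \<in> Om"
      have zV: "proj ?n z \<in> V ?n" by (rule proj_in_V)
      have z0: "proj ?n z \<noteq> 0" using z unfolding Om_def by blast
      obtain e where e: "e \<in> V k - {0}" "K e = proj ?n z" using cov[OF zV z0] by (rule imageE) (rule that, assumption, simp)
      have e1: "e \<in> V k" and e2: "e \<noteq> 0" using e(1) by auto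
      define y where "y = e + (z - proj ?n z)"
      have kD: "k \<le> D" using k by simp
      have ekn: "e \<in> V ?n" using e1 V_mono[of k ?n] by auto
      have pe: "proj k e = e" by (rule proj_V[OF kD e1])
      have pne: "proj ?n e = e" by (rule proj_V[OF k ekn])
      have lin: "proj j (a + (c - d)) = proj j a + (proj j c - proj j d)" for j a c d
        by (simp only: linear_add[OF linear_proj] linear_diff[OF linear_proj])
      have pp1: "proj k (proj ?n z) = proj k z" by (rule proj_proj[OF _ k]) simp
      have pp2: "proj ?n (proj ?n z) = proj ?n z" by (rule proj_proj[OF _ k]) simp
      have py: "proj k y = e"
        unfolding y_def lin pp1 pe by simp
      have bz: "b ?n \<bullet> y = 0"
      proof -
        have 1: "e \<bullet> b ?n = 0" by (rule V_inner_zero[OF kD e1 _ k]) simp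
        have 2: "proj ?n z \<bullet> b ?n = z \<bullet> b ?n" using proj_inner[OF k k, of z] by simp
        have "b ?n \<bullet> y = e \<bullet> b ?n + (z \<bullet> b ?n - proj ?n z \<bullet> b ?n)"
          unfolding y_def by (simp only: inner_add_right inner_diff_right inner_commute)
        then show ?thesis using 1 2 by simp
      qed
      have pny: "proj ?n y = e"
        unfolding y_def lin pp2 pne by simp
      have "Phi y = z" unfolding Phi_def py pny e(2) by (simp add: y_def)
      moreover have "y \<in> Dm" using py e2 bz unfolding Dm_def by simp
      ultimately show "z \<in> Phi ` Dm" by (metis image_eqI)
    qed
    ultimately show False using negligible_subset[OF negI OmP] by simp
  qed
  then obtain v where v: "v \<in> V ?n" "v \<noteq> 0" "v \<notin> K ` (V k - {0})" by blast
  define v' where "v' = inverse (norm v) *\<^sub>R v"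
  have v'S: "v' \<in> S ?n" using v by (simp add: v'_def S_def subspace_scale[OF subspace_V])
  have "v' \<notin> h ` S k"
  proof
    assume "v' \<in> h ` S k"
    then obtain x where x: "x \<in> S k" "v' = h x" by blast
    have xn: "x \<in> S ?n" using x S_mono[of k ?n] by auto
    have qn: "norm (q x) > 0" using qnorm[OF xn] by linarith
    define e where "e = (norm v / norm (q x)) *\<^sub>R x"
    have nx: "norm x = 1" using x by (simp add: S_def)
    have ne: "norm e = norm v / norm (q x)" using nx qn by (simp add: e_def)
    have eV: "e \<in> V k - {0}"
      using x(1) v(2) qn nx by (auto simp: e_def S_def subspace_scale[OF subspace_V])
    have "inverse (norm e) *\<^sub>R e = x" using ne v(2) qn by (simp add: e_def)
    then have "K e = (norm v / norm (q x)) *\<^sub>R q x" by (simp add: K_def ne)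
    also have "\<dots> = norm v *\<^sub>R h x" by (simp add: h_def divide_inverse)
    also have "\<dots> = norm v *\<^sub>R v'" using x(2) by simp
    also have "\<dots> = v" using v(2) by (simp add: v'_def)
    finally show False using v(3) eV by blast
  qed
  show ?thesis by (rule that[OF hc hS _ hclose v'S \<open>v' \<notin> h ` S k\<close>]) (rule hodd)
qed

end

context onb begin

lemma S0_cases: assumes "x \<in> S 0" shows "x = b 0 \<or> x = - b 0"
proof -
  have x: "x \<in> V 0" "norm x = 1" using assms by (auto simp: S_def)
  have "x = (x \<bullet> b 0) *\<^sub>R b 0" using proj_V[OF _ x(1)] by (simp add: proj_def)
  moreover have "\<bar>x \<bullet> b 0\<bar> = 1"
  proof -
    have "1 = norm ((x \<bullet> b 0) *\<^sub>R b 0)" using x(2) calculation by simp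
    then show ?thesis using b_norm[of 0] by simp
  qed
  ultimately show ?thesis by (cases "x \<bullet> b 0 \<ge> 0") (metis abs_of_nonneg scaleR_one, metis abs_of_neg not_le scaleR_minus1_left abs_minus_cancel minus_equation_iff)
qed

lemma b0_S0: "b 0 \<in> S 0"
  using b_norm[of 0] b_in_V[of 0 0] by (simp add: S_def)

lemma refl_props:
  fixes w :: 'a
  assumes w: "w \<bullet> w = 1 \<or> w = 0"
  defines "R \<equiv> \<lambda>x. x - (2 * (x \<bullet> w)) *\<^sub>R w"
  shows "R (R x) = x" "norm (R x) = norm x" "R (- x) = - R x"
proof -
  have aux: "(a*4) *\<^sub>R w = (a*2) *\<^sub>R w + (a*2) *\<^sub>R w" for a by (simp flip: scaleR_add_left)
  show "R (R x) = x"
    using w by (auto simp: R_def inner_diff_left algebra_simps aux)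
  have "(norm (R x))^2 = (norm x)^2"
    using w by (auto simp: R_def power2_norm_eq_inner inner_diff_left inner_diff_right algebra_simps inner_commute)
  then show "norm (R x) = norm x" by (simp add: power2_eq_iff_nonneg)
  show "R (- x) = - R x" by (simp add: R_def)
qed

theorem odd_degree:
  "k \<le> D \<Longrightarrow> continuous_on (S k) g \<Longrightarrow> g \<in> S k \<rightarrow> S k \<Longrightarrow> (\<And>x. x \<in> S k \<Longrightarrow> g (- x) = - g x)
   \<Longrightarrow> odd (Brouwer_degree2 k (T g))"
proof (induction k arbitrary: g)
  case 0
  have gb: "g (b 0) = b 0 \<or> g (b 0) = - b 0" using 0 b0_S0 S0_cases by blast
  have "g (g x) = x" if x: "x \<in> S 0" for x
    using S0_cases[OF x] gb "0.prems"(4)[OF b0_S0] by auto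
  then show ?case using "0.prems" by (intro T_involution) auto
next
  case (Suc k)
  let ?n = "Suc k"
  have kn: "?n \<le> D" and kD: "k \<le> D" using Suc.prems by auto
  obtain h v where hc: "continuous_on (S ?n) h" and hS: "h \<in> S ?n \<rightarrow> S ?n"
    and hodd: "\<And>x. x \<in> S ?n \<Longrightarrow> h (- x) = - h x"
    and hclose: "\<And>x. x \<in> S ?n \<Longrightarrow> norm (h x - g x) < 1"
    and vS: "v \<in> S ?n" and vh: "v \<notin> h ` S k"
    using approx[OF kn Suc.prems(2,3,4)] by blast
  define e where "e = b ?n"
  have eS: "e \<in> S ?n" using b_norm[OF kn] b_in_V[of ?n ?n] by (simp add: e_def S_def)
  have ee: "e \<bullet> e = 1" using onb[OF kn kn] by (simp add: e_def)
  define w where "w = inverse (norm (v - e)) *\<^sub>R (v - e)"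
  have w: "w \<bullet> w = 1 \<or> w = 0"
  proof (cases "v = e")
    case True then show ?thesis by (simp add: w_def)
  next
    case False
    then have "norm (v - e) \<noteq> 0" by simp
    then have "norm w = 1" by (simp add: w_def)
    then show ?thesis by (metis power2_norm_eq_inner power_one)
  qed
  define R where "R x = x - (2 * (x \<bullet> w)) *\<^sub>R w" for x
  have RR: "R (R x) = x" for x using refl_props(1)[OF w] by (simp add: R_def)
  have Rn: "norm (R x) = norm x" for x using refl_props(2)[OF w] by (simp add: R_def)
  have Rodd: "R (- x) = - R x" for x by (simp add: R_def)
  have vV: "v \<in> V ?n" and vn: "norm v = 1" using vS by (auto simp: S_def)
  have wV: "w \<in> V ?n" unfolding w_def using vV eS
    by (intro subspace_scale[OF subspace_V] subspace_diff[OF subspace_V]) (auto simp: S_def)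
  have RS: "R \<in> S ?n \<rightarrow> S ?n"
    using wV Rn by (auto simp: S_def R_def intro!: subspace_diff[OF subspace_V] subspace_scale[OF subspace_V])
  have Rc: "continuous_on (S ?n) R" unfolding R_def by (intro continuous_intros)
  have Rv: "R v = e"
  proof (cases "v = e")
    case True then show ?thesis by (simp add: R_def w_def)
  next
    case False
    then have nz: "norm (v - e) \<noteq> 0" by simp
    have vv: "v \<bullet> v = 1" using vn by (metis power2_norm_eq_inner power_one)
    have "(norm (v - e))^2 = 2 - 2 * (v \<bullet> e)"
      using vv ee by (simp add: power2_norm_eq_inner inner_diff_left inner_diff_right inner_commute)
    moreover have "v \<bullet> (v - e) = 1 - v \<bullet> e" using vv by (simp add: inner_diff_right)
    ultimately have A: "2 * (v \<bullet> (v - e)) = (norm (v - e))^2" by simp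
    have "v \<bullet> w = inverse (norm (v - e)) * (v \<bullet> (v - e))" by (simp add: w_def)
    then have "2 * (v \<bullet> w) = inverse (norm (v - e)) * (norm (v - e))^2" using A by simp
    then have "2 * (v \<bullet> w) = norm (v - e)" using nz by (simp add: power2_eq_square)
    then show ?thesis using nz by (simp add: R_def w_def)
  qed
  define h2 where "h2 = R \<circ> h"
  have h2c: "continuous_on (S ?n) h2" unfolding h2_def
    by (rule continuous_on_compose[OF hc continuous_on_subset[OF Rc]]) (use hS in auto)
  have h2S: "h2 \<in> S ?n \<rightarrow> S ?n" using hS RS by (auto simp: h2_def)
  have h2odd: "h2 (- x) = - h2 x" if "x \<in> S ?n" for x using hodd[OF that] Rodd by (simp add: h2_def)
  have h2e: "h2 x \<noteq> e \<and> h2 x \<noteq> - e" if x: "x \<in> S k" for x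
  proof
    show "h2 x \<noteq> e"
    proof
      assume "h2 x = e"
      then have "R (R (h x)) = R e" by (simp add: h2_def)
      then have "h x = v" using RR Rv by (metis)
      then show False using vh x by blast
    qed
    show "h2 x \<noteq> - e"
    proof
      assume "h2 x = - e"
      then have "R (R (h x)) = R (- e)" by (simp add: h2_def)
      then have "h x = - v" using RR Rv Rodd by (metis)
      moreover have "-x \<in> S ?n" "x \<in> S ?n" using x S_mono[of k ?n] S_sym by auto
      ultimately have "h (-x) = v" using hodd by simp
      then show False using vh S_sym[OF x] by blast
    qed
  qed
  define c where "c x = (1 - \<bar>x \<bullet> e\<bar>) * (h2 x \<bullet> e)" for x
  define u where "u x = h2 x - c x *\<^sub>R e" for x
  define f3 where "f3 x = inverse (norm (u x)) *\<^sub>R u x" for x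
  have h2n: "norm (h2 x) = 1" if "x \<in> S ?n" for x using h2S that by (auto simp: S_def)
  have xe: "\<bar>x \<bullet> e\<bar> \<le> 1" if "x \<in> S ?n" for x
    using Cauchy_Schwarz_ineq2[of x e] that eS by (auto simp: S_def)
  have he: "\<bar>h2 x \<bullet> e\<bar> \<le> 1" if "x \<in> S ?n" for x
    using Cauchy_Schwarz_ineq2[of "h2 x" e] h2n[OF that] eS by (auto simp: S_def)
  have u0: "u x \<noteq> 0" if x: "x \<in> S ?n" for x
  proof
    assume "u x = 0"
    then have hx: "h2 x = c x *\<^sub>R e" by (simp add: u_def)
    then have "h2 x \<bullet> e = c x" using ee by simp
    then have cc: "c x = (1 - \<bar>x \<bullet> e\<bar>) * c x" by (simp add: c_def)
    have "c x \<noteq> 0" using hx h2n[OF x] by auto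
    then have "x \<bullet> e = 0" using cc by (simp add: algebra_simps)
    then have "x \<in> V k" using V_step[OF kn] x by (auto simp: S_def e_def inner_commute)
    then have xk: "x \<in> S k" using x by (auto simp: S_def)
    have "\<bar>c x\<bar> = 1" using hx h2n[OF x] eS by (simp add: S_def)
    then have "h2 x = e \<or> h2 x = - e" using hx by (cases "c x \<ge> 0") auto
    then show False using h2e[OF xk] by blast
  qed
  have uV: "u x \<in> V ?n" if "x \<in> S ?n" for x
    using h2S that eS unfolding u_def
    by (intro subspace_diff[OF subspace_V] subspace_scale[OF subspace_V]) (auto simp: S_def)
  have f3S: "f3 \<in> S ?n \<rightarrow> S ?n"
    using u0 uV by (auto simp: f3_def S_def subspace_scale[OF subspace_V])
  have f3c: "continuous_on (S ?n) f3"
  proof -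
    have "continuous_on (S ?n) u" unfolding u_def c_def
      by (intro continuous_intros h2c)
    then show ?thesis unfolding f3_def using u0
      by (intro continuous_on_scaleR continuous_on_inverse continuous_on_norm) auto
  qed
  have f3odd: "f3 (- x) = - f3 x" if "x \<in> S ?n" for x
  proof -
    have "u (- x) = - u x" using h2odd[OF that] by (simp add: u_def c_def)
    then show ?thesis by (simp add: f3_def)
  qed
  have f3k: "f3 x \<in> S k" if x: "x \<in> S k" for x
  proof -
    have xn: "x \<in> S ?n" using x S_mono[of k ?n] by auto
    have "x \<bullet> e = 0" using V_inner_zero[OF kD _ _ kn, of x] x by (auto simp: S_def e_def)
    then have "u x \<bullet> e = 0" using ee by (simp add: u_def c_def inner_diff_left)
    then have "u x \<in> V k" using V_step[OF kn uV[OF xn]] by (simp add: e_def)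
    then have "f3 x \<in> V k" by (simp add: f3_def subspace_scale[OF subspace_V])
    then show ?thesis using f3S xn by (auto simp: S_def)
  qed
  have na: "h2 x + f3 x \<noteq> 0" if x: "x \<in> S ?n" for x
  proof
    assume "h2 x + f3 x = 0"
    then have fh: "f3 x = - h2 x" by (simp add: eq_neg_iff_add_eq_0 add.commute)
    have ux: "u x = norm (u x) *\<^sub>R f3 x" using u0[OF x] by (simp add: f3_def)
    then have "u x = - norm (u x) *\<^sub>R h2 x" using fh by simp
    then have "(1 + norm (u x)) *\<^sub>R h2 x = c x *\<^sub>R e" by (simp add: u_def algebra_simps)
    then have "(1 + norm (u x)) * (h2 x \<bullet> h2 x) = c x * (e \<bullet> h2 x)"
      by (metis inner_scaleR_left)
    then have "1 + norm (u x) = (1 - \<bar>x \<bullet> e\<bar>) * (h2 x \<bullet> e)^2"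
      using h2n[OF x] by (simp add: c_def power2_norm_eq_inner[symmetric] inner_commute power2_eq_square)
    moreover have "(1 - \<bar>x \<bullet> e\<bar>) * (h2 x \<bullet> e)^2 \<le> 1"
    proof -
      have "(h2 x \<bullet> e)^2 \<le> 1" using he[OF x] by (metis abs_le_square_iff abs_one power_one)
      moreover have "0 \<le> 1 - \<bar>x \<bullet> e\<bar>" "1 - \<bar>x \<bullet> e\<bar> \<le> 1" using xe[OF x] by auto
      ultimately show ?thesis by (metis mult_le_one zero_le_power2)
    qed
    ultimately have "norm (u x) \<le> 0" by linarith
    then show False using u0[OF x] by simp
  qed
  have 0: "Brouwer_degree2 ?n (T g) = Brouwer_degree2 ?n (T h)"
  proof (rule T_homotopic[OF kn])
    show "homotopic_with_canon (\<lambda>_. True) (S ?n) (S ?n) g h"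
      unfolding S_def
    proof (rule nonantipodal_homotopic[OF subspace_V])
      show "continuous_on (sphere 0 1 \<inter> V ?n) g" using Suc.prems(2) by (simp add: S_def)
      show "continuous_on (sphere 0 1 \<inter> V ?n) h" using hc by (simp add: S_def)
      show "g \<in> sphere 0 1 \<inter> V ?n \<rightarrow> sphere 0 1 \<inter> V ?n" using Suc.prems(3) by (simp add: S_def)
      show "h \<in> sphere 0 1 \<inter> V ?n \<rightarrow> sphere 0 1 \<inter> V ?n" using hS by (simp add: S_def)
      fix x assume x: "x \<in> sphere 0 1 \<inter> V ?n"
      show "g x + h x \<noteq> 0"
      proof
        assume "g x + h x = 0"
        then have hx: "h x = - g x" by (metis add.commute eq_neg_iff_add_eq_0)
        have "h x - g x = - (2 *\<^sub>R g x)" unfolding hx scaleR_2 by simp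
        moreover have "norm (g x) = 1" using Suc.prems(3) x by (auto simp: S_def)
        ultimately have "norm (h x - g x) = 2" by simp
        then show False using hclose[of x] x by (simp add: S_def)
      qed
    qed
  qed
  have 2: "Brouwer_degree2 ?n (T h2) = Brouwer_degree2 ?n (T R) * Brouwer_degree2 ?n (T h)"
    unfolding h2_def by (rule T_compose[OF kn Rc RS hc hS])
  have 3: "Brouwer_degree2 ?n (T h2) = Brouwer_degree2 ?n (T f3)"
  proof (rule T_homotopic[OF kn])
    show "homotopic_with_canon (\<lambda>_. True) (S ?n) (S ?n) h2 f3"
      unfolding S_def
      by (rule nonantipodal_homotopic[OF subspace_V]) (use h2c f3c h2S f3S na in \<open>auto simp: S_def\<close>)
  qed
  have 4: "even (Brouwer_degree2 ?n (T f3) - Brouwer_degree2 (?n - Suc 0) (T f3))"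
  proof (rule Borsuk_odd_mapping_degree_step)
    show "continuous_map (nsphere ?n) (nsphere ?n) (T f3)" by (rule T_cont[OF kn f3c f3S])
    show "(T f3 \<circ> (\<lambda>x i. - x i)) u = ((\<lambda>x i. - x i) \<circ> T f3) u" if "u \<in> topspace (nsphere ?n)" for u
      by (rule T_odd[OF kn _ that]) (rule f3odd)
    show "T f3 \<in> topspace (nsphere (?n - Suc 0)) \<rightarrow> topspace (nsphere (?n - Suc 0))"
      using rho_S[OF kD] f3k iota_S[OF kD] by (auto simp: T_def)
  qed
  have 5: "odd (Brouwer_degree2 k (T f3))"
  proof (rule Suc.IH[OF kD])
    show "continuous_on (S k) f3" by (rule continuous_on_subset[OF f3c S_mono]) simp
    show "f3 \<in> S k \<rightarrow> S k" using f3k by auto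
    show "f3 (- x) = - f3 x" if "x \<in> S k" for x using f3odd that S_mono[of k ?n] by auto
  qed
  have 6: "odd (Brouwer_degree2 ?n (T R))"
    by (rule T_involution[OF kn Rc RS]) (simp add: RR)
  have "odd (Brouwer_degree2 ?n (T f3))" using 4 5 by simp
  then have "odd (Brouwer_degree2 ?n (T R) * Brouwer_degree2 ?n (T h))" using 2 3 by simp
  then show ?case using 0 by simp
qed

end

context onb begin

lemma BU:
  assumes c: "continuous_on (S D) phi" and od: "\<And>x. x \<in> S D \<Longrightarrow> phi (- x) = - phi x"
    and inV: "\<And>x. x \<in> S D \<Longrightarrow> phi x \<in> V D" and orth: "\<And>x. x \<in> S D \<Longrightarrow> phi x \<bullet> b D = 0"
  shows "\<exists>x\<in>S D. phi x = 0"
proof (rule ccontr)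
  assume "\<not> ?thesis"
  then have nz: "\<And>x. x \<in> S D \<Longrightarrow> phi x \<noteq> 0" by blast
  define g where "g x = inverse (norm (phi x)) *\<^sub>R phi x" for x
  have gS: "g \<in> S D \<rightarrow> S D" using nz inV by (auto simp: g_def S_def subspace_scale[OF subspace_V])
  have gc: "continuous_on (S D) g" unfolding g_def using nz
    by (intro continuous_on_scaleR continuous_on_inverse continuous_on_norm c) auto
  have god: "g (- x) = - g x" if "x \<in> S D" for x using od[OF that] by (simp add: g_def)
  have "odd (Brouwer_degree2 D (T g))"
    by (rule odd_degree[OF order_refl gc gS]) (rule god)
  moreover have "Brouwer_degree2 D (T g) = 0"
  proof (rule Brouwer_degree2_nonsurjective)
    show "continuous_map (nsphere D) (nsphere D) (T g)" by (rule T_cont[OF order_refl gc gS])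
    have bS: "b D \<in> S D" using b_norm[of D] b_in_V[of D D] by (simp add: S_def)
    have "iota (b D) \<notin> T g ` topspace (nsphere D)"
    proof
      assume "iota (b D) \<in> T g ` topspace (nsphere D)"
      then obtain z where z: "z \<in> topspace (nsphere D)" "iota (b D) = iota (g (rho z))"
        by (auto simp: T_def)
      have rz: "rho z \<in> S D" by (rule rho_S[OF order_refl z(1)])
      have "rho (iota (b D)) = rho (iota (g (rho z)))" using z(2) by simp
      moreover have gz: "g (rho z) \<in> V D" using gS rz by (auto simp: S_def)
      moreover have bV: "b D \<in> V D" using bS by (simp add: S_def)
      ultimately have "b D = g (rho z)"
        using rho_iota[OF bV] rho_iota[OF gz] by simp
      then have "b D \<bullet> b D = 0" using orth[OF rz] by (simp add: g_def)
      then show False using onb[of D D] by simp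
    qed
    then show "T g ` topspace (nsphere D) \<noteq> topspace (nsphere D)"
      using iota_S[OF order_refl bS] by blast
  qed
  ultimately show False by simp
qed

lemma V_D_UNIV: assumes "DIM('a) = Suc D" shows "V D = UNIV"
proof -
  have inj: "inj_on b {..D}"
  proof (rule inj_onI)
    fix i j assume "i \<in> {..D}" "j \<in> {..D}" "b i = b j"
    then show "i = j" using onb[of i j] onb[of i i] by (auto split: if_splits)
  qed
  have ind: "independent (b ` {..D})"
  proof (rule pairwise_orthogonal_independent)
    show "pairwise orthogonal (b ` {..D})"
      using onb by (auto simp: pairwise_def orthogonal_def)
    show "0 \<notin> b ` {..D}" using b_ne0 by auto
  qed
  have "card (b ` {..D}) = Suc D" using card_image[OF inj] by simp
  then have "UNIV \<subseteq> span (b ` {..D})"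
    using ind assms by (intro card_ge_dim_independent) (auto simp: dim_UNIV)
  then show ?thesis by (auto simp: V_def)
qed

end

lemma BU_prod:
  fixes F :: "(real^'n) \<times> real \<Rightarrow> real^'n"
  assumes c: "continuous_on (sphere 0 1) F" and od: "\<And>u. u \<in> sphere 0 1 \<Longrightarrow> F (- u) = - F u"
  shows "\<exists>u\<in>sphere 0 1. F u = 0"
proof -
  let ?d = "CARD('n)"
  obtain en where en: "bij_betw en {0..<?d} (UNIV :: 'n set)"
    using ex_bij_betw_nat_finite[of "UNIV :: 'n set"] by auto
  define b :: "nat \<Rightarrow> (real^'n) \<times> real" where "b i = (if i < ?d then (axis (en i) 1, 0) else (0, 1))" for i
  have injen: "\<And>i j. i < ?d \<Longrightarrow> j < ?d \<Longrightarrow> en i = en j \<Longrightarrow> i = j"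
    using en by (auto simp: bij_betw_def inj_on_def)
  interpret onb b ?d
  proof
    fix i j assume "i \<le> ?d" "j \<le> ?d"
    then show "b i \<bullet> b j = (if i = j then 1 else 0)"
      using injen[of i j] by (auto simp: b_def inner_Pair inner_axis_axis)
  qed
  have VU: "V ?d = UNIV" by (rule V_D_UNIV) simp
  have SD: "S ?d = sphere 0 1" by (simp add: S_def VU)
  define phi where "phi u = (F u, 0::real)" for u
  have "\<exists>x\<in>S ?d. phi x = 0"
  proof (rule BU)
    show "continuous_on (S ?d) phi" unfolding SD phi_def by (intro continuous_intros c)
    show "phi (- x) = - phi x" if "x \<in> S ?d" for x using od[of x] that SD by (simp add: phi_def)
    show "phi x \<in> V ?d" for x by (simp add: VU)
    show "phi x \<bullet> b ?d = 0" for x by (simp add: phi_def b_def inner_Pair)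
  qed
  then show ?thesis using SD by (auto simp: phi_def zero_prod_def)
qed

lemma exists_cut:
  fixes U :: "'n::finite \<Rightarrow> (real^'n) set"
  assumes fin: "\<And>i. finite (U i)"
  shows "\<exists>a0 b0. norm (a0, b0) = 1 \<and> (\<exists>phi :: real^'n \<Rightarrow> real. (\<forall>x. \<bar>phi x\<bar> \<le> 1) \<and> (\<forall>i. (\<Sum>x\<in>U i. phi x) = 0) \<and>
           (\<forall>x\<in>(\<Union>i. U i). (a0 \<bullet> x > b0 \<longrightarrow> phi x = 1) \<and> (a0 \<bullet> x < b0 \<longrightarrow> phi x = -1)))"
proof -
  define cl where "cl t = max (-1) (min 1 t)" for t :: real
  have clodd: "cl (- t) = - cl t" for t by (simp add: cl_def)
  have clb: "\<bar>cl t\<bar> \<le> 1" for t by (simp add: cl_def)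
  define F where "F e u = (\<chi> i. \<Sum>x\<in>U i. cl ((fst u \<bullet> x - snd u) / e))" for e and u :: "(real^'n) \<times> real"
  have "\<exists>u\<in>sphere 0 1. F (inverse (real (Suc k))) u = 0" for k
  proof (rule BU_prod)
    have ne: "inverse (real (Suc k)) \<noteq> (0::real)" by simp
    have "continuous_on (sphere 0 1) (F e)" if "e \<noteq> 0" for e
      unfolding F_def cl_def
      by (intro continuous_on_vec_lambda continuous_on_sum continuous_intros) (use that in auto)
    then show "continuous_on (sphere 0 1) (F (inverse (real (Suc k))))" using ne by blast
    fix u :: "(real^'n) \<times> real"
    have "cl ((fst (- u) \<bullet> x - snd (- u)) / e) = - cl ((fst u \<bullet> x - snd u) / e)" for x e
      using clodd[of "(fst u \<bullet> x - snd u) / e"] by (simp add: algebra_simps minus_divide_left)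
    then show "F (inverse (real (Suc k))) (- u) = - F (inverse (real (Suc k))) u"
      by (simp add: F_def vec_eq_iff sum_negf)
  qed
  then obtain us where usS: "\<And>k. us k \<in> sphere 0 1" and us0: "\<And>k. F (inverse (real (Suc k))) (us k) = 0"
    by metis
  obtain l r where lS: "l \<in> sphere 0 1" and r: "strict_mono r" and lim: "(us \<circ> r) \<longlonglongrightarrow> l"
    using compact_imp_seq_compact[OF compact_sphere, of 0 1] usS unfolding seq_compact_def by metis
  define a0 where "a0 = fst l"
  define b0 where "b0 = snd l"
  let ?A = "\<Union>i. U i"
  have finA: "finite ?A" using fin by simp
  define val where "val k x = fst (us (r k)) \<bullet> x - snd (us (r k))" for k x
  define eps where "eps k = inverse (real (Suc (r k)))" for k
  have elim: "eps \<longlonglongrightarrow> 0"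
    using LIMSEQ_subseq_LIMSEQ[OF LIMSEQ_inverse_real_of_nat r] unfolding eps_def o_def .
  have epos: "eps k > 0" for k by (simp add: eps_def)
  have ev: "eventually (\<lambda>k. \<forall>x\<in>?A. (a0 \<bullet> x > b0 \<longrightarrow> cl (val k x / eps k) = 1) \<and> (a0 \<bullet> x < b0 \<longrightarrow> cl (val k x / eps k) = -1)) sequentially"
  proof (rule eventually_ball_finite[OF finA], intro ballI)
    fix x
    have vlim: "(\<lambda>k. val k x) \<longlonglongrightarrow> a0 \<bullet> x - b0"
      unfolding val_def a0_def b0_def
      using lim by (intro tendsto_intros) (auto simp: o_def intro: tendsto_fst tendsto_snd)
    show "eventually (\<lambda>k. (a0 \<bullet> x > b0 \<longrightarrow> cl (val k x / eps k) = 1) \<and> (a0 \<bullet> x < b0 \<longrightarrow> cl (val k x / eps k) = -1)) sequentially"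
    proof (cases "a0 \<bullet> x > b0")
      case True
      define t where "t = a0 \<bullet> x - b0"
      have t: "t > 0" using True by (simp add: t_def)
      have e1: "eventually (\<lambda>k. val k x > t/2) sequentially"
        using order_tendstoD(1)[OF vlim, of "t/2"] t by (simp add: t_def)
      have e2: "eventually (\<lambda>k. eps k < t/2) sequentially"
        using order_tendstoD(2)[OF elim, of "t/2"] t by simp
      show ?thesis using eventually_conj[OF e1 e2]
      proof (rule eventually_mono)
        fix k assume k: "t/2 < val k x \<and> eps k < t/2"
        then have "val k x / eps k \<ge> 1" using epos[of k] by (simp add: field_simps)
        then show "(a0 \<bullet> x > b0 \<longrightarrow> cl (val k x / eps k) = 1) \<and> (a0 \<bullet> x < b0 \<longrightarrow> cl (val k x / eps k) = -1)"
          using True by (simp add: cl_def)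
      qed
    next
      case False
      show ?thesis
      proof (cases "a0 \<bullet> x < b0")
        case True
        define t where "t = b0 - a0 \<bullet> x"
        have t: "t > 0" using True by (simp add: t_def)
        have e1: "eventually (\<lambda>k. val k x < - t/2) sequentially"
          using order_tendstoD(2)[OF vlim, of "- t/2"] t by (simp add: t_def)
        have e2: "eventually (\<lambda>k. eps k < t/2) sequentially"
          using order_tendstoD(2)[OF elim, of "t/2"] t by simp
        show ?thesis using eventually_conj[OF e1 e2]
        proof (rule eventually_mono)
          fix k assume k: "val k x < - t/2 \<and> eps k < t/2"
          then have "val k x / eps k \<le> -1" using epos[of k] by (simp add: field_simps)
          then show "(a0 \<bullet> x > b0 \<longrightarrow> cl (val k x / eps k) = 1) \<and> (a0 \<bullet> x < b0 \<longrightarrow> cl (val k x / eps k) = -1)"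
            using True by (simp add: cl_def)
        qed
      next
        case False
        then show ?thesis using \<open>\<not> a0 \<bullet> x > b0\<close> by simp
      qed
    qed
  qed
  then obtain K where K: "\<forall>x\<in>?A. (a0 \<bullet> x > b0 \<longrightarrow> cl (val K x / eps K) = 1) \<and> (a0 \<bullet> x < b0 \<longrightarrow> cl (val K x / eps K) = -1)"
    unfolding eventually_sequentially by blast
  define phi where "phi x = cl (val K x / eps K)" for x
  have sums: "(\<Sum>x\<in>U i. phi x) = 0" for i
  proof -
    have "F (inverse (real (Suc (r K)))) (us (r K)) $ i = 0" using us0[of "r K"] by simp
    then show ?thesis by (simp add: F_def phi_def val_def eps_def)
  qed
  have nrm: "norm (a0, b0) = 1" using lS by (simp add: a0_def b0_def)
  have K': "\<forall>x\<in>?A. (a0 \<bullet> x > b0 \<longrightarrow> phi x = 1) \<and> (a0 \<bullet> x < b0 \<longrightarrow> phi x = -1)"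
    using K by (simp add: phi_def)
  have clb': "\<forall>x. \<bar>phi x\<bar> \<le> 1" using clb by (simp add: phi_def)
  show ?thesis
    using nrm sums K' clb' by blast
qed

theorem mainTheorem3:
  fixes U :: "'n::finite \<Rightarrow> (real ^ 'n) set"
  assumes fin: "\<And>i. finite (U i)"
    and odd: "\<And>i. odd (card (U i))"
    and disj: "\<And>i j. i \<noteq> j \<Longrightarrow> U i \<inter> U j = {}"
    and gp: "general_position (\<Union>i. U i)"
  shows "\<exists>p :: 'n \<Rightarrow> real ^ 'n. (\<forall>i. p i \<in> U i) \<and>
           (\<exists>a b. a \<noteq> 0 \<and> affine hull (range p) = {x. a \<bullet> x = b} \<and>
              (\<forall>i. card {x \<in> U i. a \<bullet> x < b} = (card (U i) - 1) div 2 \<and>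
                   card {x \<in> U i. a \<bullet> x > b} = (card (U i) - 1) div 2))"
proof -
  let ?d = "CARD('n)"
  let ?A = "\<Union>i. U i"
  have finA: "finite ?A" using fin by simp
  have gp': "\<And>T. T \<subseteq> ?A \<Longrightarrow> card T \<le> ?d + 1 \<Longrightarrow> \<not> affine_dependent T"
    using gp by (simp add: general_position_def)
  obtain a0 b0 and phi :: "real^'n \<Rightarrow> real" where nrm: "norm (a0, b0) = 1" and pb0: "\<forall>x. \<bar>phi x\<bar> \<le> 1"
    and sums0: "\<forall>i. (\<Sum>x\<in>U i. phi x) = 0"
    and sg0: "\<forall>x\<in>?A. (a0 \<bullet> x > b0 \<longrightarrow> phi x = 1) \<and> (a0 \<bullet> x < b0 \<longrightarrow> phi x = -1)"
    using exists_cut[of U, OF fin] by blast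
  have pb: "\<And>x. \<bar>phi x\<bar> \<le> 1" using pb0 by blast
  have sums: "\<And>i. (\<Sum>x\<in>U i. phi x) = 0" using sums0 by blast
  have sg: "\<And>x. x \<in> ?A \<Longrightarrow> (a0 \<bullet> x > b0 \<longrightarrow> phi x = 1) \<and> (a0 \<bullet> x < b0 \<longrightarrow> phi x = -1)"
    using sg0 by blast
  define P where "P i = {x \<in> U i. a0 \<bullet> x > b0}" for i
  define N where "N i = {x \<in> U i. a0 \<bullet> x < b0}" for i
  define Z where "Z i = {x \<in> U i. a0 \<bullet> x = b0}" for i
  have finP: "finite (P i)" "finite (N i)" "finite (Z i)" for i using fin by (auto simp: P_def N_def Z_def)
  have Usplit: "U i = P i \<union> (N i \<union> Z i)" for i by (auto simp: P_def N_def Z_def)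
  have dj1: "P i \<inter> (N i \<union> Z i) = {}" and dj2: "N i \<inter> Z i = {}" for i by (auto simp: P_def N_def Z_def)
  have cardU: "card (U i) = card (P i) + (card (N i) + card (Z i))" for i
  proof -
    have fNZ: "finite (N i \<union> Z i)" using finP by simp
    have "card (U i) = card (P i) + card (N i \<union> Z i)"
      unfolding Usplit[of i] by (rule card_Un_disjoint[OF finP(1) fNZ dj1])
    then show ?thesis using card_Un_disjoint[OF finP(2,3) dj2] by simp
  qed
  have sP: "(\<Sum>x\<in>P i. phi x) = real (card (P i))" for i
  proof -
    have "(\<Sum>x\<in>P i. phi x) = (\<Sum>x\<in>P i. 1)" by (rule sum.cong) (use sg in \<open>auto simp: P_def\<close>)
    then show ?thesis by simp
  qed
  have sN: "(\<Sum>x\<in>N i. phi x) = - real (card (N i))" for i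
  proof -
    have "(\<Sum>x\<in>N i. phi x) = (\<Sum>x\<in>N i. -1)" by (rule sum.cong) (use sg in \<open>auto simp: N_def\<close>)
    then show ?thesis by simp
  qed
  have decomp: "real (card (P i)) - real (card (N i)) + (\<Sum>x\<in>Z i. phi x) = 0" for i
  proof -
    have fNZ: "finite (N i \<union> Z i)" using finP by simp
    have e1: "(\<Sum>x\<in>U i. phi x) = (\<Sum>x\<in>P i. phi x) + (\<Sum>x\<in>N i \<union> Z i. phi x)"
      unfolding Usplit[of i] by (rule sum.union_disjoint[OF finP(1) fNZ dj1])
    have e2: "(\<Sum>x\<in>N i \<union> Z i. phi x) = (\<Sum>x\<in>N i. phi x) + (\<Sum>x\<in>Z i. phi x)"
      by (rule sum.union_disjoint[OF finP(2,3) dj2])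
    have "(\<Sum>x\<in>U i. phi x) = (\<Sum>x\<in>P i. phi x) + ((\<Sum>x\<in>N i. phi x) + (\<Sum>x\<in>Z i. phi x))"
      using e1 e2 by simp
    then show ?thesis using sums[of i] sP[of i] sN[of i] by simp
  qed
  have Zne: "Z i \<noteq> {}" for i
  proof
    assume Z0: "Z i = {}"
    then have "real (card (P i)) = real (card (N i))" using decomp[of i] by simp
    then have "card (P i) = card (N i)" by simp
    then have "card (U i) = 2 * card (P i)" using cardU[of i] Z0 by simp
    then show False using odd[of i] by simp
  qed
  have a0ne: "a0 \<noteq> 0"
  proof
    assume a0: "a0 = 0"
    then have "\<bar>b0\<bar> = 1" using nrm by (simp add: norm_Pair)
    then have "Z undefined = {}" using a0 by (auto simp: Z_def)
    then show False using Zne by blast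
  qed
  define Zall where "Zall = {x \<in> ?A. a0 \<bullet> x = b0}"
  have finZ: "finite Zall" unfolding Zall_def by (rule finite_subset[OF _ finA]) blast
  have cardZ: "card Zall \<le> ?d"
  proof (rule ccontr)
    assume "\<not> ?thesis"
    then have "?d + 1 \<le> card Zall" by simp
    then obtain T where T: "T \<subseteq> Zall" "card T = ?d + 1" "finite T"
      by (rule obtain_subset_with_card_n)
    have ind: "\<not> affine_dependent T" using T by (intro gp') (auto simp: Zall_def)
    have "int (card T) = aff_dim T + 1" by (rule aff_dim_affine_independent[OF ind])
    then have adT: "aff_dim T = int ?d" using T(2) by simp
    have "T \<subseteq> {x. a0 \<bullet> x = b0}" using T(1) by (auto simp: Zall_def)
    then have "aff_dim T \<le> aff_dim {x. a0 \<bullet> x = b0}" by (rule aff_dim_subset)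
    also have "\<dots> = int (DIM(real^'n) - 1)" by (rule aff_dim_hyperplane[OF a0ne])
    finally show False using adT by simp
  qed
  have djZ: "Z i \<inter> Z j = {}" if "i \<noteq> j" for i j using disj[OF that] by (auto simp: Z_def)
  have "(\<Sum>i\<in>UNIV. card (Z i)) = card (\<Union>i. Z i)"
    by (rule card_UN_disjoint[symmetric]) (use finP djZ in auto)
  also have "\<dots> \<le> card Zall" by (rule card_mono[OF finZ]) (auto simp: Z_def Zall_def)
  finally have sumZ: "(\<Sum>i\<in>UNIV. card (Z i)) \<le> ?d" using cardZ by simp
  have Z1: "card (Z i) = 1" for i
  proof (rule ccontr)
    assume ne1: "card (Z i) \<noteq> 1"
    have ge1: "1 \<le> card (Z j)" for j using Zne[of j] finP(3)[of j] by (simp add: card_gt_0_iff Suc_le_eq)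
    have a1: "\<forall>j\<in>UNIV. (1::nat) \<le> card (Z j)" using ge1 by blast
    have "(1::nat) < card (Z i)" using ge1[of i] ne1 by linarith
    then have a2: "\<exists>j\<in>UNIV. (1::nat) < card (Z j)" by blast
    have "(\<Sum>j\<in>(UNIV::'n set). (1::nat)) < (\<Sum>j\<in>UNIV. card (Z j))"
      using sum_strict_mono_ex1[OF finite_class.finite_UNIV a1 a2] .
    then show False using sumZ by simp
  qed
  have "\<forall>i. \<exists>x. Z i = {x}" using Z1 by (metis card_1_singletonE)
  then obtain p where p: "\<And>i. Z i = {p i}" by metis
  have pU: "p i \<in> U i" and pH: "a0 \<bullet> p i = b0" for i using p[of i] by (auto simp: Z_def)
  have counts: "card (N i) = (card (U i) - 1) div 2 \<and> card (P i) = (card (U i) - 1) div 2" for i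
  proof -
    have "real (card (P i)) - real (card (N i)) = - phi (p i)" using decomp[of i] p[of i] by simp
    then have "\<bar>real (card (P i)) - real (card (N i))\<bar> \<le> 1" using pb[of "p i"] by simp
    then have le: "card (P i) \<le> card (N i) + 1" "card (N i) \<le> card (P i) + 1" by linarith+
    have cu: "card (U i) = card (P i) + card (N i) + 1" using cardU[of i] p[of i] by simp
    then have "even (card (P i) + card (N i))" using odd[of i] by simp
    then have "card (P i) = card (N i)" using le by presburger
    then show ?thesis using cu by simp
  qed
  have injp: "inj p"
  proof (rule injI)
    fix i j assume "p i = p j"
    then show "i = j" using pU[of i] pU[of j] disj[of i j] by auto
  qed
  have cardp: "card (range p) = ?d" using card_image[OF injp] by simp
  have indp: "\<not> affine_dependent (range p)" using pU cardp by (intro gp') auto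
  have "int (card (range p)) = aff_dim (range p) + 1" by (rule aff_dim_affine_independent[OF indp])
  then have adp: "aff_dim (affine hull (range p)) = int ?d - 1" using cardp by (simp add: aff_dim_affine_hull)
  have hull: "affine hull (range p) = {x. a0 \<bullet> x = b0}"
  proof (rule affine_dim_equal)
    show "affine (affine hull (range p))" by simp
    show "affine {x. a0 \<bullet> x = b0}" by (rule affine_hyperplane)
    show "affine hull (range p) \<noteq> {}" by simp
    show "affine hull (range p) \<subseteq> {x. a0 \<bullet> x = b0}"
      by (rule hull_minimal) (use pH affine_hyperplane in auto)
    have "aff_dim {x. a0 \<bullet> x = b0} = int (DIM(real^'n) - 1)" by (rule aff_dim_hyperplane[OF a0ne])
    then show "aff_dim (affine hull (range p)) = aff_dim {x. a0 \<bullet> x = b0}" using adp by simp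
  qed
  show ?thesis
  proof (intro exI conjI allI)
    show "p i \<in> U i" for i by (rule pU)
    show "a0 \<noteq> 0" by (rule a0ne)
    show "affine hull (range p) = {x. a0 \<bullet> x = b0}" by (rule hull)
    show "card {x \<in> U i. a0 \<bullet> x < b0} = (card (U i) - 1) div 2" for i using counts[of i] by (simp add: N_def)
    show "card {x \<in> U i. a0 \<bullet> x > b0} = (card (U i) - 1) div 2" for i using counts[of i] by (simp add: P_def)
  qed
qed

end
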